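(* For every positive integer $n$, $UQ(\mathrm{OMB}_n)=1$ and $UQC(\mathrm{DOMB}_n)\ge \frac{\log n-3}{2}$.
   Context: For $x\in\{0,1\}^n$, $\mathrm{OMB}_n(x)=k \bmod 2$ where $k$ is the largest index with $x_k=1$ ($k=0$ if $x=0^n$). For $a,b\in\{0,1\}^n$, $\mathrm{DOMB}_n(a,b)=\mathrm{OMB}_n(a\wedge b)$, where $a\wedge b$ is the bitwise AND. $UQ(f)$ is the minimum number of oracle queries (oracle $O_x:|i,b,z\rangle\mapsto|i,b\oplus x_i,z\rangle$) of a quantum query algorithm that on every input outputs $f(x)$ with probability strictly greater than $1/2$. $UQC(g)$ for $g:\{0,1\}^{n_1}\times\{0,1\}^{n_2}\rightarrow\{0,1\}$ is the minimum number of qubits communicated in a two-party (two-way, no prior shared entanglement) quantum communication protocol that on every input outputs $g$ with probability strictly greater than $1/2$. $\log$ is base 2. *)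

theory Defs
  imports "HOL-Analysis.Analysis"
begin

text \<open>An n-bit string x in {0,1}^n is a predicate on indices 1..n (True = bit 1),
  normalised to be False outside {1..n}.\<close>

definition bits :: "nat \<Rightarrow> (nat \<Rightarrow> bool) set" where
  "bits n = {x. \<forall>i. x i \<longrightarrow> i \<in> {1..n}}"

definition OMB :: "nat \<Rightarrow> (nat \<Rightarrow> bool) \<Rightarrow> bool" where
  "OMB n x = (let k = (if \<exists>i\<in>{1..n}. x i then (GREATEST i. i \<in> {1..n} \<and> x i) else 0)
              in odd k)"

definition DOMB :: "nat \<Rightarrow> (nat \<Rightarrow> bool) \<Rightarrow> (nat \<Rightarrow> bool) \<Rightarrow> bool" where
  "DOMB n a b = OMB n (\<lambda>i. a i \<and> b i)"

definition unitary_on :: "'a set \<Rightarrow> ('a \<Rightarrow> 'a \<Rightarrow> complex) \<Rightarrow> bool" where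
  "unitary_on S U \<longleftrightarrow>
     (\<forall>i\<in>S. \<forall>j\<in>S. (\<Sum>k\<in>S. U i k * cnj (U j k)) = (if i = j then 1 else 0)) \<and>
     (\<forall>i\<in>S. \<forall>j\<in>S. (\<Sum>k\<in>S. cnj (U k i) * U k j) = (if i = j then 1 else 0))"

definition apply_on :: "'a set \<Rightarrow> ('a \<Rightarrow> 'a \<Rightarrow> complex) \<Rightarrow> ('a \<Rightarrow> complex) \<Rightarrow> ('a \<Rightarrow> complex)" where
  "apply_on S U v = (\<lambda>i. \<Sum>j\<in>S. U i j * v j)"

definition ket :: "'a \<Rightarrow> ('a \<Rightarrow> complex)" where
  "ket a = (\<lambda>i. if i = a then 1 else 0)"

text \<open>Basis states |i,b,z> with query index i in {1..n}, target bit b, workspace z < w.\<close>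

definition QB :: "nat \<Rightarrow> nat \<Rightarrow> (nat \<times> bool \<times> nat) set" where
  "QB n w = {1..n} \<times> (UNIV :: bool set) \<times> {0..<w}"

definition query_op :: "(nat \<Rightarrow> bool) \<Rightarrow> (nat \<times> bool \<times> nat \<Rightarrow> complex) \<Rightarrow> (nat \<times> bool \<times> nat \<Rightarrow> complex)" where
  "query_op x v = (\<lambda>(i, b, z). v (i, b \<noteq> x i, z))"

text \<open>Final state of the algorithm U_T O_x ... U_1 O_x U_0 |1,0,0>, where Us = [U_1,...,U_T].\<close>

definition query_final ::
  "nat \<Rightarrow> nat \<Rightarrow> (nat \<Rightarrow> bool) \<Rightarrow> (nat \<times> bool \<times> nat \<Rightarrow> nat \<times> bool \<times> nat \<Rightarrow> complex)
   \<Rightarrow> (nat \<times> bool \<times> nat \<Rightarrow> nat \<times> bool \<times> nat \<Rightarrow> complex) list \<Rightarrow> (nat \<times> bool \<times> nat \<Rightarrow> complex)" where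
  "query_final n w x U0 Us =
     foldl (\<lambda>v U. apply_on (QB n w) U (query_op x v)) (apply_on (QB n w) U0 (ket (1, False, 0))) Us"

definition UQ_computes :: "nat \<Rightarrow> ((nat \<Rightarrow> bool) \<Rightarrow> bool) \<Rightarrow> nat \<Rightarrow> bool" where
  "UQ_computes n f T \<longleftrightarrow>
     (\<exists>w U0 Us out. 0 < w \<and> length Us = T \<and> unitary_on (QB n w) U0 \<and>
        (\<forall>U\<in>set Us. unitary_on (QB n w) U) \<and>
        (\<forall>x\<in>bits n. (\<Sum>s\<in>{s\<in>QB n w. out s = f x}. (cmod (query_final n w x U0 Us s))\<^sup>2) > 1/2))"

definition UQ :: "nat \<Rightarrow> ((nat \<Rightarrow> bool) \<Rightarrow> bool) \<Rightarrow> nat" where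
  "UQ n f = (LEAST T. UQ_computes n f T)"

text \<open>The global system consists of qubits 0..N-1; a computational basis state is the set of qubits
  that are 1.  Every qubit is owned by one party at each time (False = Alice, True = Bob).
  A step is either a local unitary of a party on the qubits it currently owns, depending on that
  party's input, or the transmission of one qubit to the other party (cost 1 qubit).
  No prior entanglement: the initial state is |0...0>.\<close>

datatype cstep =
    Local bool "(nat \<Rightarrow> bool) \<Rightarrow> nat set \<Rightarrow> nat set \<Rightarrow> complex"
  | Send nat

definition owned :: "nat \<Rightarrow> (nat \<Rightarrow> bool) \<Rightarrow> bool \<Rightarrow> nat set" where
  "owned N own p = {q. q < N \<and> own q = p}"

definition local_op :: "nat \<Rightarrow> nat set \<Rightarrow> (nat set \<Rightarrow> nat set \<Rightarrow> complex)
    \<Rightarrow> (nat set \<Rightarrow> complex) \<Rightarrow> (nat set \<Rightarrow> complex)" where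
  "local_op N S M v = (\<lambda>z. \<Sum>z'\<in>Pow {0..<N}. (if z - S = z' - S then M (z \<inter> S) (z' \<inter> S) else 0) * v z')"

fun cstep_sem :: "nat \<Rightarrow> (nat \<Rightarrow> bool) \<Rightarrow> (nat \<Rightarrow> bool) \<Rightarrow> cstep
    \<Rightarrow> (nat \<Rightarrow> bool) \<times> (nat set \<Rightarrow> complex) \<Rightarrow> (nat \<Rightarrow> bool) \<times> (nat set \<Rightarrow> complex)" where
  "cstep_sem N a b (Local p M) (own, v) =
     (own, local_op N (owned N own p) (M (if p then b else a)) v)"
| "cstep_sem N a b (Send q) (own, v) = (own(q := \<not> own q), v)"

definition run_protocol :: "nat \<Rightarrow> (nat \<Rightarrow> bool) \<Rightarrow> cstep list \<Rightarrow> (nat \<Rightarrow> bool) \<Rightarrow> (nat \<Rightarrow> bool)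
    \<Rightarrow> (nat \<Rightarrow> bool) \<times> (nat set \<Rightarrow> complex)" where
  "run_protocol N own0 steps a b = fold (cstep_sem N a b) steps (own0, ket {})"

text \<open>Ownership evolves independently of the inputs; each local step must be unitary on the
  qubits owned by the acting party (for every possible input of that party).\<close>

fun valid_steps :: "nat \<Rightarrow> (nat \<Rightarrow> bool) set \<Rightarrow> (nat \<Rightarrow> bool) set \<Rightarrow> (nat \<Rightarrow> bool) \<Rightarrow> cstep list \<Rightarrow> bool" where
  "valid_steps N XA XB own [] = True"
| "valid_steps N XA XB own (Local p M # st) =
     ((\<forall>inp\<in>(if p then XB else XA). unitary_on (Pow (owned N own p)) (M inp)) \<and>
      valid_steps N XA XB own st)"
| "valid_steps N XA XB own (Send q # st) = (q < N \<and> valid_steps N XA XB (own(q := \<not> own q)) st)"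

fun comm_cost :: "cstep list \<Rightarrow> nat" where
  "comm_cost [] = 0"
| "comm_cost (Local p M # st) = comm_cost st"
| "comm_cost (Send q # st) = Suc (comm_cost st)"

definition UQC_computes :: "nat \<Rightarrow> ((nat \<Rightarrow> bool) \<Rightarrow> (nat \<Rightarrow> bool) \<Rightarrow> bool) \<Rightarrow> nat \<Rightarrow> bool" where
  "UQC_computes n g c \<longleftrightarrow>
     (\<exists>N own0 steps qo. qo < N \<and> valid_steps N (bits n) (bits n) own0 steps \<and> comm_cost steps = c \<and>
        (\<forall>a\<in>bits n. \<forall>b\<in>bits n.
           (\<Sum>z\<in>{z\<in>Pow {0..<N}. (qo \<in> z) = g a b}. (cmod (snd (run_protocol N own0 steps a b) z))\<^sup>2) > 1/2))"

definition UQC :: "nat \<Rightarrow> ((nat \<Rightarrow> bool) \<Rightarrow> (nat \<Rightarrow> bool) \<Rightarrow> bool) \<Rightarrow> nat" where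
  "UQC n g = (LEAST c. UQC_computes n g c)"

end

theory Submission
  imports Defs
begin


lemma sum_split_pow:
  assumes "finite U" "S \<subseteq> U"
  shows "(\<Sum>z\<in>Pow U. h z) = (\<Sum>t\<in>Pow (U - S). \<Sum>s\<in>Pow S. h (t \<union> s))"
proof -
  have "(\<Sum>t\<in>Pow (U - S). \<Sum>s\<in>Pow S. h (t \<union> s)) = (\<Sum>p\<in>Pow (U - S) \<times> Pow S. h (fst p \<union> snd p))"
    by (simp add: sum.cartesian_product split_def)
  also have "\<dots> = (\<Sum>z\<in>Pow U. h z)"
    by (rule sum.reindex_bij_witness[where i="\<lambda>z. (z - S, z \<inter> S)" and j="\<lambda>p. fst p \<union> snd p"])
       (use assms in auto)
  finally show ?thesis by simp
qed

lemma local_op_R: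
  assumes "S \<subseteq> {0..<N}" "z \<subseteq> {0..<N}"
  shows "local_op N S M v z = (\<Sum>y\<in>Pow S. M (z \<inter> S) y * v ((z - S) \<union> y))"
proof -
  have "local_op N S M v z = (\<Sum>t\<in>Pow ({0..<N} - S). \<Sum>s\<in>Pow S.
      (if z - S = (t \<union> s) - S then M (z \<inter> S) ((t \<union> s) \<inter> S) else 0) * v (t \<union> s))"
    unfolding local_op_def by (rule sum_split_pow) (use assms in auto)
  also have "\<dots> = (\<Sum>t\<in>Pow ({0..<N} - S). \<Sum>s\<in>Pow S.
      (if z - S = t then M (z \<inter> S) s * v (t \<union> s) else 0))"
  proof (rule sum.cong[OF refl], rule sum.cong[OF refl])
    fix t s assume "t \<in> Pow ({0..<N} - S)" "s \<in> Pow S"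
    then have "(t \<union> s) - S = t" "(t \<union> s) \<inter> S = s" by auto
    then show "(if z - S = (t \<union> s) - S then M (z \<inter> S) ((t \<union> s) \<inter> S) else 0) * v (t \<union> s) =
      (if z - S = t then M (z \<inter> S) s * v (t \<union> s) else 0)" by simp
  qed
  also have "\<dots> = (\<Sum>t\<in>Pow ({0..<N} - S). if z - S = t then (\<Sum>s\<in>Pow S. M (z \<inter> S) s * v (t \<union> s)) else 0)"
    by (rule sum.cong) auto
  also have "\<dots> = (\<Sum>s\<in>Pow S. M (z \<inter> S) s * v ((z - S) \<union> s))"
    using assms by (subst sum.delta') auto
  finally show ?thesis .
qed

lemma norm_pres:
  assumes "finite S"
    and U: "\<forall>i\<in>S. \<forall>j\<in>S. (\<Sum>k\<in>S. cnj (U k i) * U k j) = (if i = j then 1 else 0)"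
  shows "(\<Sum>s\<in>S. (cmod (\<Sum>j\<in>S. U s j * v j))\<^sup>2) = (\<Sum>j\<in>S. (cmod (v j))\<^sup>2)"
proof -
  have c: "complex_of_real ((cmod w)\<^sup>2) = w * cnj w" for w
    by (rule complex_norm_square)
  have "complex_of_real (\<Sum>s\<in>S. (cmod (\<Sum>j\<in>S. U s j * v j))\<^sup>2)
      = (\<Sum>s\<in>S. (\<Sum>j\<in>S. U s j * v j) * cnj (\<Sum>k\<in>S. U s k * v k))"
    by (simp only: of_real_sum c)
  also have "\<dots> = (\<Sum>s\<in>S. \<Sum>k\<in>S. \<Sum>j\<in>S. (U s j * v j) * (cnj (U s k) * cnj (v k)))"
    by (simp add: sum_distrib_left sum_distrib_right cnj_sum)
  also have "\<dots> = (\<Sum>j\<in>S. \<Sum>k\<in>S. v j * cnj (v k) * (\<Sum>s\<in>S. cnj (U s k) * U s j))"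
  proof -
    have "(\<Sum>s\<in>S. \<Sum>k\<in>S. \<Sum>j\<in>S. (U s j * v j) * (cnj (U s k) * cnj (v k)))
       = (\<Sum>s\<in>S. \<Sum>j\<in>S. \<Sum>k\<in>S. (U s j * v j) * (cnj (U s k) * cnj (v k)))"
      by (rule sum.cong[OF refl], rule sum.swap)
    also have "\<dots> = (\<Sum>j\<in>S. \<Sum>s\<in>S. \<Sum>k\<in>S. (U s j * v j) * (cnj (U s k) * cnj (v k)))"
      by (rule sum.swap)
    also have "\<dots> = (\<Sum>j\<in>S. \<Sum>k\<in>S. \<Sum>s\<in>S. (U s j * v j) * (cnj (U s k) * cnj (v k)))"
      by (rule sum.cong[OF refl], rule sum.swap)
    also have "\<dots> = (\<Sum>j\<in>S. \<Sum>k\<in>S. v j * cnj (v k) * (\<Sum>s\<in>S. cnj (U s k) * U s j))"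
      by (simp add: sum_distrib_left mult_ac)
    finally show ?thesis .
  qed
  also have "\<dots> = (\<Sum>j\<in>S. \<Sum>k\<in>S. if k = j then v j * cnj (v k) else 0)"
    using U by (intro sum.cong refl) auto
  also have "\<dots> = (\<Sum>j\<in>S. v j * cnj (v j))"
    using assms by (simp add: sum.delta)
  also have "\<dots> = complex_of_real (\<Sum>j\<in>S. (cmod (v j))\<^sup>2)"
    by (simp only: of_real_sum c)
  finally show ?thesis using of_real_eq_iff by blast
qed

lemma owned_sub: "owned N own p \<subseteq> {0..<N}"
  by (auto simp: owned_def)

lemma local_op_norm:
  assumes S: "S \<subseteq> {0..<N}" and U: "unitary_on (Pow S) M"
  shows "(\<Sum>z\<in>Pow {0..<N}. (cmod (local_op N S M v z))\<^sup>2) = (\<Sum>z\<in>Pow {0..<N}. (cmod (v z))\<^sup>2)"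
proof -
  have fS: "finite (Pow S)" using S finite_subset by blast
  have "(\<Sum>z\<in>Pow {0..<N}. (cmod (local_op N S M v z))\<^sup>2)
     = (\<Sum>t\<in>Pow ({0..<N} - S). \<Sum>s\<in>Pow S. (cmod (local_op N S M v (t \<union> s)))\<^sup>2)"
    by (rule sum_split_pow) (use S in auto)
  also have "\<dots> = (\<Sum>t\<in>Pow ({0..<N} - S). \<Sum>s\<in>Pow S. (cmod (\<Sum>y\<in>Pow S. M s y * v (t \<union> y)))\<^sup>2)"
  proof (rule sum.cong[OF refl], rule sum.cong[OF refl])
    fix t s assume ts: "t \<in> Pow ({0..<N} - S)" "s \<in> Pow S"
    have "local_op N S M v (t \<union> s) = (\<Sum>y\<in>Pow S. M ((t \<union> s) \<inter> S) y * v (((t \<union> s) - S) \<union> y))"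
      by (rule local_op_R) (use S ts in auto)
    moreover have "(t \<union> s) \<inter> S = s" "(t \<union> s) - S = t" using ts by auto
    ultimately show "(cmod (local_op N S M v (t \<union> s)))\<^sup>2 = (cmod (\<Sum>y\<in>Pow S. M s y * v (t \<union> y)))\<^sup>2"
      by simp
  qed
  also have "\<dots> = (\<Sum>t\<in>Pow ({0..<N} - S). \<Sum>s\<in>Pow S. (cmod (v (t \<union> s)))\<^sup>2)"
    by (rule sum.cong[OF refl], rule norm_pres[OF fS]) (use U in \<open>auto simp: unitary_on_def\<close>)
  also have "\<dots> = (\<Sum>z\<in>Pow {0..<N}. (cmod (v z))\<^sup>2)"
    by (rule sum_split_pow[symmetric]) (use S in auto)
  finally show ?thesis .
qed

fun ownf :: "cstep list \<Rightarrow> (nat \<Rightarrow> bool) \<Rightarrow> (nat \<Rightarrow> bool)" where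
  "ownf [] own = own"
| "ownf (Local p M # st) own = ownf st own"
| "ownf (Send q # st) own = ownf st (own(q := \<not> own q))"

lemma fst_fold: "fst (fold (cstep_sem N a b) st (own, v)) = ownf st own"
proof (induction st arbitrary: own v)
  case (Cons s st) then show ?case by (cases s) (simp_all add: fun_upd_def)
qed simp

lemma norm_run:
  "valid_steps N X Y own st \<Longrightarrow> a \<in> X \<Longrightarrow> b \<in> Y \<Longrightarrow>
   (\<Sum>z\<in>Pow {0..<N}. (cmod (snd (fold (cstep_sem N a b) st (own, v)) z))\<^sup>2) = (\<Sum>z\<in>Pow {0..<N}. (cmod (v z))\<^sup>2)"
proof (induction st arbitrary: own v)
  case Nil
  then show ?case by simp
next
  case (Cons s st)
  show ?case
  proof (cases s)
    case (Local p M)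
    have u: "unitary_on (Pow (owned N own p)) (M (if p then b else a))"
      using Cons.prems Local by (cases p) auto
    have "(\<Sum>z\<in>Pow {0..<N}. (cmod (snd (fold (cstep_sem N a b) (s # st) (own, v)) z))\<^sup>2)
       = (\<Sum>z\<in>Pow {0..<N}. (cmod (local_op N (owned N own p) (M (if p then b else a)) v z))\<^sup>2)"
      using Cons Local by simp
    also have "\<dots> = (\<Sum>z\<in>Pow {0..<N}. (cmod (v z))\<^sup>2)"
      by (rule local_op_norm[OF owned_sub u])
    finally show ?thesis .
  next
    case (Send q)
    have vs: "valid_steps N X Y (own(q:=\<not>own q)) st" using Cons.prems Send by simp
    show ?thesis using Cons.IH[OF vs Cons.prems(2,3)] Send by (simp add: fun_upd_def)
  qed
qed

definition Ls :: "nat \<Rightarrow> bool list set" where "Ls j = {xs. length xs = j}"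

lemma finite_Ls: "finite (Ls j)"
  unfolding Ls_def using finite_lists_length_eq[of "UNIV::bool set" j] by simp

lemma card_Ls: "card (Ls j) = 2 ^ j"
  unfolding Ls_def using card_lists_length_eq[of "UNIV::bool set" j] by simp

lemma sum_Ls_Suc: "(\<Sum>xs\<in>Ls (Suc j). f xs) = (\<Sum>ys\<in>Ls j. f (True # ys)) + (\<Sum>ys\<in>Ls j. f (False # ys))"
proof -
  have e: "Ls (Suc j) = (Cons True) ` Ls j \<union> (Cons False) ` Ls j"
    unfolding Ls_def by (auto simp: length_Suc_conv)
  have "(\<Sum>xs\<in>Ls (Suc j). f xs) = (\<Sum>xs\<in>(Cons True) ` Ls j. f xs) + (\<Sum>xs\<in>(Cons False) ` Ls j. f xs)"
    unfolding e by (rule sum.union_disjoint) (auto simp: finite_Ls)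
  also have "\<dots> = (\<Sum>ys\<in>Ls j. f (True # ys)) + (\<Sum>ys\<in>Ls j. f (False # ys))"
    by (simp add: sum.reindex)
  finally show ?thesis .
qed

definition decomp :: "(nat\<Rightarrow>bool) set \<Rightarrow> (nat\<Rightarrow>bool) set \<Rightarrow> nat \<Rightarrow> (nat\<Rightarrow>bool) \<Rightarrow> nat
   \<Rightarrow> ((nat\<Rightarrow>bool) \<Rightarrow> (nat\<Rightarrow>bool) \<Rightarrow> nat set \<Rightarrow> complex) \<Rightarrow> bool" where
  "decomp X Y N own j V \<longleftrightarrow> (\<exists>F G. \<forall>a\<in>X. \<forall>b\<in>Y. \<forall>z\<in>Pow {0..<N}.
     V a b z = (\<Sum>xs\<in>Ls j. F a xs (z \<inter> owned N own False) * G b xs (z \<inter> owned N own True)))"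

lemma decomp_local_A:
  assumes "decomp X Y N own j V"
  shows "decomp X Y N own j (\<lambda>a b. local_op N (owned N own False) (M a) (V a b))"
proof -
  let ?A = "owned N own False" and ?B = "owned N own True"
  obtain F G where FG: "\<forall>a\<in>X. \<forall>b\<in>Y. \<forall>z\<in>Pow {0..<N}.
     V a b z = (\<Sum>xs\<in>Ls j. F a xs (z \<inter> ?A) * G b xs (z \<inter> ?B))"
    using assms unfolding decomp_def by blast
  define F' where "F' a xs s = (\<Sum>y\<in>Pow ?A. M a s y * F a xs y)" for a xs s
  have "\<forall>a\<in>X. \<forall>b\<in>Y. \<forall>z\<in>Pow {0..<N}.
     local_op N ?A (M a) (V a b) z = (\<Sum>xs\<in>Ls j. F' a xs (z \<inter> ?A) * G b xs (z \<inter> ?B))"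
  proof (intro ballI)
    fix a b z assume ab: "a \<in> X" "b \<in> Y" and z: "z \<in> Pow {0..<N}"
    have "local_op N ?A (M a) (V a b) z = (\<Sum>y\<in>Pow ?A. M a (z \<inter> ?A) y * V a b ((z - ?A) \<union> y))"
      by (rule local_op_R) (use z owned_sub in auto)
    also have "\<dots> = (\<Sum>y\<in>Pow ?A. M a (z \<inter> ?A) y * (\<Sum>xs\<in>Ls j. F a xs y * G b xs (z \<inter> ?B)))"
    proof (rule sum.cong[OF refl])
      fix y assume y: "y \<in> Pow ?A"
      have m: "(z - ?A) \<union> y \<in> Pow {0..<N}" using z y owned_sub by blast
      have e1: "((z - ?A) \<union> y) \<inter> ?A = y" using y by auto
      have e2: "((z - ?A) \<union> y) \<inter> ?B = z \<inter> ?B" using y z by (auto simp: owned_def)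
      show "M a (z \<inter> ?A) y * V a b ((z - ?A) \<union> y) = M a (z \<inter> ?A) y * (\<Sum>xs\<in>Ls j. F a xs y * G b xs (z \<inter> ?B))"
        using FG ab m by (simp add: e1 e2)
    qed
    also have "\<dots> = (\<Sum>y\<in>Pow ?A. \<Sum>xs\<in>Ls j. M a (z \<inter> ?A) y * F a xs y * G b xs (z \<inter> ?B))"
      by (simp add: sum_distrib_left mult_ac)
    also have "\<dots> = (\<Sum>xs\<in>Ls j. \<Sum>y\<in>Pow ?A. M a (z \<inter> ?A) y * F a xs y * G b xs (z \<inter> ?B))"
      by (rule sum.swap)
    also have "\<dots> = (\<Sum>xs\<in>Ls j. F' a xs (z \<inter> ?A) * G b xs (z \<inter> ?B))"
      by (simp add: F'_def sum_distrib_right)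
    finally show "local_op N ?A (M a) (V a b) z = (\<Sum>xs\<in>Ls j. F' a xs (z \<inter> ?A) * G b xs (z \<inter> ?B))" .
  qed
  then show ?thesis unfolding decomp_def by blast
qed

lemma decomp_local_B:
  assumes "decomp X Y N own j V"
  shows "decomp X Y N own j (\<lambda>a b. local_op N (owned N own True) (M b) (V a b))"
proof -
  let ?A = "owned N own False" and ?B = "owned N own True"
  obtain F G where FG: "\<forall>a\<in>X. \<forall>b\<in>Y. \<forall>z\<in>Pow {0..<N}.
     V a b z = (\<Sum>xs\<in>Ls j. F a xs (z \<inter> ?A) * G b xs (z \<inter> ?B))"
    using assms unfolding decomp_def by blast
  define G' where "G' b xs s = (\<Sum>y\<in>Pow ?B. M b s y * G b xs y)" for b xs s
  have "\<forall>a\<in>X. \<forall>b\<in>Y. \<forall>z\<in>Pow {0..<N}.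
     local_op N ?B (M b) (V a b) z = (\<Sum>xs\<in>Ls j. F a xs (z \<inter> ?A) * G' b xs (z \<inter> ?B))"
  proof (intro ballI)
    fix a b z assume ab: "a \<in> X" "b \<in> Y" and z: "z \<in> Pow {0..<N}"
    have "local_op N ?B (M b) (V a b) z = (\<Sum>y\<in>Pow ?B. M b (z \<inter> ?B) y * V a b ((z - ?B) \<union> y))"
      by (rule local_op_R) (use z owned_sub in auto)
    also have "\<dots> = (\<Sum>y\<in>Pow ?B. M b (z \<inter> ?B) y * (\<Sum>xs\<in>Ls j. F a xs (z \<inter> ?A) * G b xs y))"
    proof (rule sum.cong[OF refl])
      fix y assume y: "y \<in> Pow ?B"
      have m: "(z - ?B) \<union> y \<in> Pow {0..<N}" using z y owned_sub by blast
      have e1: "((z - ?B) \<union> y) \<inter> ?B = y" using y by auto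
      have e2: "((z - ?B) \<union> y) \<inter> ?A = z \<inter> ?A" using y z by (auto simp: owned_def)
      show "M b (z \<inter> ?B) y * V a b ((z - ?B) \<union> y) = M b (z \<inter> ?B) y * (\<Sum>xs\<in>Ls j. F a xs (z \<inter> ?A) * G b xs y)"
        using FG ab m by (simp add: e1 e2)
    qed
    also have "\<dots> = (\<Sum>y\<in>Pow ?B. \<Sum>xs\<in>Ls j. F a xs (z \<inter> ?A) * (M b (z \<inter> ?B) y * G b xs y))"
      by (simp add: sum_distrib_left mult_ac)
    also have "\<dots> = (\<Sum>xs\<in>Ls j. \<Sum>y\<in>Pow ?B. F a xs (z \<inter> ?A) * (M b (z \<inter> ?B) y * G b xs y))"
      by (rule sum.swap)
    also have "\<dots> = (\<Sum>xs\<in>Ls j. F a xs (z \<inter> ?A) * G' b xs (z \<inter> ?B))"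
      by (simp add: G'_def sum_distrib_left)
    finally show "local_op N ?B (M b) (V a b) z = (\<Sum>xs\<in>Ls j. F a xs (z \<inter> ?A) * G' b xs (z \<inter> ?B))" .
  qed
  then show ?thesis unfolding decomp_def by blast
qed

lemma decomp_send:
  assumes d: "decomp X Y N own j V" and q: "q < N"
  shows "decomp X Y N (own(q := \<not> own q)) (Suc j) V"
proof -
  let ?A = "owned N own False" and ?B = "owned N own True"
  let ?own = "own(q := \<not> own q)"
  let ?A' = "owned N ?own False" and ?B' = "owned N ?own True"
  obtain F G where FG: "\<forall>a\<in>X. \<forall>b\<in>Y. \<forall>z\<in>Pow {0..<N}.
     V a b z = (\<Sum>xs\<in>Ls j. F a xs (z \<inter> ?A) * G b xs (z \<inter> ?B))"
    using d unfolding decomp_def by blast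
  show ?thesis
  proof (cases "own q")
    case False
    define F' where "F' a xs s = (case xs of [] \<Rightarrow> 0 | \<beta> # ys \<Rightarrow> F a ys (if \<beta> then insert q s else s))" for a xs s
    define G' where "G' b xs t = (case xs of [] \<Rightarrow> 0 | \<beta> # ys \<Rightarrow> (if (q \<in> t) = \<beta> then G b ys (t - {q}) else 0))" for b xs t
    have "\<forall>a\<in>X. \<forall>b\<in>Y. \<forall>z\<in>Pow {0..<N}.
     V a b z = (\<Sum>xs\<in>Ls (Suc j). F' a xs (z \<inter> ?A') * G' b xs (z \<inter> ?B'))"
    proof (intro ballI)
      fix a b z assume ab: "a \<in> X" "b \<in> Y" and z: "z \<in> Pow {0..<N}"
      have s1: "(if q \<in> z then insert q (z \<inter> ?A') else z \<inter> ?A') = z \<inter> ?A"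
        using False q by (auto simp: owned_def)
      have s2: "(z \<inter> ?B') - {q} = z \<inter> ?B" using False q by (auto simp: owned_def)
      have qB: "(q \<in> z \<inter> ?B') = (q \<in> z)" using False q by (auto simp: owned_def)
      have "(\<Sum>xs\<in>Ls (Suc j). F' a xs (z \<inter> ?A') * G' b xs (z \<inter> ?B'))
          = (\<Sum>ys\<in>Ls j. F' a (True # ys) (z \<inter> ?A') * G' b (True # ys) (z \<inter> ?B'))
          + (\<Sum>ys\<in>Ls j. F' a (False # ys) (z \<inter> ?A') * G' b (False # ys) (z \<inter> ?B'))"
        by (rule sum_Ls_Suc)
      also have "\<dots> = (\<Sum>ys\<in>Ls j. F a ys (z \<inter> ?A) * G b ys (z \<inter> ?B))"
        using s1 s2 qB by (cases "q \<in> z") (simp_all add: F'_def G'_def)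
      also have "\<dots> = V a b z" using FG ab z by simp
      finally show "V a b z = (\<Sum>xs\<in>Ls (Suc j). F' a xs (z \<inter> ?A') * G' b xs (z \<inter> ?B'))" by simp
    qed
    then show ?thesis unfolding decomp_def by blast
  next
    case True
    define G' where "G' b xs s = (case xs of [] \<Rightarrow> 0 | \<beta> # ys \<Rightarrow> G b ys (if \<beta> then insert q s else s))" for b xs s
    define F' where "F' a xs t = (case xs of [] \<Rightarrow> 0 | \<beta> # ys \<Rightarrow> (if (q \<in> t) = \<beta> then F a ys (t - {q}) else 0))" for a xs t
    have "\<forall>a\<in>X. \<forall>b\<in>Y. \<forall>z\<in>Pow {0..<N}.
     V a b z = (\<Sum>xs\<in>Ls (Suc j). F' a xs (z \<inter> ?A') * G' b xs (z \<inter> ?B'))"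
    proof (intro ballI)
      fix a b z assume ab: "a \<in> X" "b \<in> Y" and z: "z \<in> Pow {0..<N}"
      have s1: "(if q \<in> z then insert q (z \<inter> ?B') else z \<inter> ?B') = z \<inter> ?B"
        using True q by (auto simp: owned_def)
      have s2: "(z \<inter> ?A') - {q} = z \<inter> ?A" using True q by (auto simp: owned_def)
      have qB: "(q \<in> z \<inter> ?A') = (q \<in> z)" using True q by (auto simp: owned_def)
      have "(\<Sum>xs\<in>Ls (Suc j). F' a xs (z \<inter> ?A') * G' b xs (z \<inter> ?B'))
          = (\<Sum>ys\<in>Ls j. F' a (True # ys) (z \<inter> ?A') * G' b (True # ys) (z \<inter> ?B'))
          + (\<Sum>ys\<in>Ls j. F' a (False # ys) (z \<inter> ?A') * G' b (False # ys) (z \<inter> ?B'))"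
        by (rule sum_Ls_Suc)
      also have "\<dots> = (\<Sum>ys\<in>Ls j. F a ys (z \<inter> ?A) * G b ys (z \<inter> ?B))"
        using s1 s2 qB by (cases "q \<in> z") (simp_all add: F'_def G'_def)
      also have "\<dots> = V a b z" using FG ab z by simp
      finally show "V a b z = (\<Sum>xs\<in>Ls (Suc j). F' a xs (z \<inter> ?A') * G' b xs (z \<inter> ?B'))" by simp
    qed
    then show ?thesis unfolding decomp_def by blast
  qed
qed

lemma decomp_run:
  "decomp X Y N own j V \<Longrightarrow> valid_steps N X Y own st \<Longrightarrow>
   decomp X Y N (ownf st own) (j + comm_cost st) (\<lambda>a b. snd (fold (cstep_sem N a b) st (own, V a b)))"
proof (induction st arbitrary: own j V)
  case Nil
  then show ?case by simp
next
  case (Cons s st)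
  show ?case
  proof (cases s)
    case (Local p M)
    define V' where "V' a b = local_op N (owned N own p) (M (if p then b else a)) (V a b)" for a b
    have d: "decomp X Y N own j V'"
    proof (cases p)
      case True
      then show ?thesis unfolding V'_def using decomp_local_B[OF Cons.prems(1), of M] by simp
    next
      case False
      then show ?thesis unfolding V'_def using decomp_local_A[OF Cons.prems(1), of M] by simp
    qed
    have vs: "valid_steps N X Y own st" using Cons.prems(2) Local by simp
    show ?thesis using Cons.IH[OF d vs] Local by (simp add: V'_def)
  next
    case (Send q)
    have vs: "valid_steps N X Y (own(q := \<not> own q)) st" and q: "q < N" using Cons.prems(2) Send by auto
    have d: "decomp X Y N (own(q := \<not> own q)) (Suc j) V" by (rule decomp_send[OF Cons.prems(1) q])
    show ?thesis using Cons.IH[OF d vs] Send by (simp add: fun_upd_def)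
  qed
qed


lemma bilinear:
  assumes d: "decomp X Y N own j V" and qo: "qo < N"
  shows "\<exists>\<phi> \<psi>. \<forall>a\<in>X. \<forall>b\<in>Y.
     (\<Sum>z\<in>Pow {0..<N}. (if qo \<in> z then 1 else -1) * (cmod (V a b z))\<^sup>2)
       = (\<Sum>i\<in>(Ls j \<times> Ls j) \<times> (UNIV::bool set). \<phi> a i * \<psi> b i)"
proof -
  let ?A = "owned N own False" and ?B = "owned N own True"
  obtain F G where FG: "\<forall>a\<in>X. \<forall>b\<in>Y. \<forall>z\<in>Pow {0..<N}.
     V a b z = (\<Sum>xs\<in>Ls j. F a xs (z \<inter> ?A) * G b xs (z \<inter> ?B))"
    using d unfolding decomp_def by blast
  define sA :: "nat set \<Rightarrow> real" where "sA s = (if qo \<in> ?A then (if qo \<in> s then 1 else -1) else 1)" for s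
  define sB :: "nat set \<Rightarrow> real" where "sB s = (if qo \<in> ?B then (if qo \<in> s then 1 else -1) else 1)" for s
  define XX where "XX a p = (\<Sum>s\<in>Pow ?A. of_real (sA s) * (F a (fst p) s * cnj (F a (snd p) s)))" for a p
  define YY where "YY b p = (\<Sum>t\<in>Pow ?B. of_real (sB t) * (G b (fst p) t * cnj (G b (snd p) t)))" for b p
  let ?P = "Ls j \<times> Ls j"
  have fA: "finite (Pow ?A)" and fB: "finite (Pow ?B)"
    using owned_sub[of N own] by (meson finite_Pow_iff finite_atLeastLessThan finite_subset)+
  have key: "complex_of_real (\<Sum>z\<in>Pow {0..<N}. (if qo \<in> z then 1 else -1) * (cmod (V a b z))\<^sup>2)
       = (\<Sum>p\<in>?P. XX a p * YY b p)" if ab: "a \<in> X" "b \<in> Y" for a b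
  proof -
    have BA: "{0..<N} - ?A = ?B" by (auto simp: owned_def)
    have "complex_of_real (\<Sum>z\<in>Pow {0..<N}. (if qo \<in> z then 1 else -1) * (cmod (V a b z))\<^sup>2)
        = (\<Sum>z\<in>Pow {0..<N}. of_real (if qo \<in> z then 1 else -1) * (V a b z * cnj (V a b z)))"
      by (simp only: of_real_sum of_real_mult complex_norm_square)
    also have "\<dots> = (\<Sum>t\<in>Pow ?B. \<Sum>s\<in>Pow ?A. of_real (if qo \<in> t \<union> s then 1 else -1) * (V a b (t \<union> s) * cnj (V a b (t \<union> s))))"
      by (subst sum_split_pow[of "{0..<N}" ?A]) (simp_all add: owned_sub BA)
    also have "\<dots> = (\<Sum>t\<in>Pow ?B. \<Sum>s\<in>Pow ?A. \<Sum>p\<in>?P.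
        of_real (sA s) * (F a (fst p) s * cnj (F a (snd p) s)) * (of_real (sB t) * (G b (fst p) t * cnj (G b (snd p) t))))"
    proof (rule sum.cong[OF refl], rule sum.cong[OF refl])
      fix t s assume ts: "t \<in> Pow ?B" "s \<in> Pow ?A"
      have m: "t \<union> s \<in> Pow {0..<N}" using ts owned_sub by blast
      have e1: "(t \<union> s) \<inter> ?A = s" "(t \<union> s) \<inter> ?B = t" using ts by (auto simp: owned_def)
      have sg: "(if qo \<in> t \<union> s then 1 else -1) = sA s * sB t"
        using ts qo by (auto simp: sA_def sB_def owned_def)
      have V: "V a b (t \<union> s) = (\<Sum>x\<in>Ls j. F a x s * G b x t)" using FG ab m e1 by simp
      show "of_real (if qo \<in> t \<union> s then 1 else -1) * (V a b (t \<union> s) * cnj (V a b (t \<union> s))) =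
        (\<Sum>p\<in>?P. of_real (sA s) * (F a (fst p) s * cnj (F a (snd p) s)) * (of_real (sB t) * (G b (fst p) t * cnj (G b (snd p) t))))"
      proof -
        have "V a b (t \<union> s) * cnj (V a b (t \<union> s)) = (\<Sum>x\<in>Ls j. F a x s * G b x t) * (\<Sum>y\<in>Ls j. cnj (F a y s) * cnj (G b y t))"
          by (simp add: V cnj_sum)
        also have "\<dots> = (\<Sum>x\<in>Ls j. \<Sum>y\<in>Ls j. (F a x s * G b x t) * (cnj (F a y s) * cnj (G b y t)))"
          by (rule sum_product)
        also have "\<dots> = (\<Sum>p\<in>?P. (F a (fst p) s * G b (fst p) t) * (cnj (F a (snd p) s) * cnj (G b (snd p) t)))"
          by (simp add: sum.cartesian_product split_def)
        finally have e: "V a b (t \<union> s) * cnj (V a b (t \<union> s)) = \<dots>" .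
        show ?thesis
          unfolding e sg sum_distrib_left
          by (rule sum.cong[OF refl]) (simp add: of_real_mult mult_ac)
      qed
    qed
    also have "\<dots> = (\<Sum>p\<in>?P. \<Sum>s\<in>Pow ?A. \<Sum>t\<in>Pow ?B.
        of_real (sA s) * (F a (fst p) s * cnj (F a (snd p) s)) * (of_real (sB t) * (G b (fst p) t * cnj (G b (snd p) t))))"
    proof -
      have "(\<Sum>t\<in>Pow ?B. \<Sum>s\<in>Pow ?A. \<Sum>p\<in>?P. of_real (sA s) * (F a (fst p) s * cnj (F a (snd p) s)) * (of_real (sB t) * (G b (fst p) t * cnj (G b (snd p) t)))) = (\<Sum>t\<in>Pow ?B. \<Sum>p\<in>?P. \<Sum>s\<in>Pow ?A. of_real (sA s) * (F a (fst p) s * cnj (F a (snd p) s)) * (of_real (sB t) * (G b (fst p) t * cnj (G b (snd p) t))))"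
        by (rule sum.cong[OF refl], rule sum.swap)
      also have "\<dots> = (\<Sum>p\<in>?P. \<Sum>t\<in>Pow ?B. \<Sum>s\<in>Pow ?A. of_real (sA s) * (F a (fst p) s * cnj (F a (snd p) s)) * (of_real (sB t) * (G b (fst p) t * cnj (G b (snd p) t))))"
        by (rule sum.swap)
      also have "\<dots> = (\<Sum>p\<in>?P. \<Sum>s\<in>Pow ?A. \<Sum>t\<in>Pow ?B. of_real (sA s) * (F a (fst p) s * cnj (F a (snd p) s)) * (of_real (sB t) * (G b (fst p) t * cnj (G b (snd p) t))))"
        by (rule sum.cong[OF refl], rule sum.swap)
      finally show ?thesis .
    qed
    also have "\<dots> = (\<Sum>p\<in>?P. XX a p * YY b p)"
      by (simp only: XX_def YY_def sum_product)
    finally show ?thesis .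
  qed
  define \<phi> where "\<phi> a i = (if snd i then Re (XX a (fst i)) else Im (XX a (fst i)))" for a i
  define \<psi> where "\<psi> b i = (if snd i then Re (YY b (fst i)) else - Im (YY b (fst i)))" for b i
  have "(\<Sum>z\<in>Pow {0..<N}. (if qo \<in> z then 1 else -1) * (cmod (V a b z))\<^sup>2)
       = (\<Sum>i\<in>?P \<times> (UNIV::bool set). \<phi> a i * \<psi> b i)" if ab: "a \<in> X" "b \<in> Y" for a b
  proof -
    have "(\<Sum>z\<in>Pow {0..<N}. (if qo \<in> z then 1 else -1) * (cmod (V a b z))\<^sup>2)
        = Re (\<Sum>p\<in>?P. XX a p * YY b p)"
      unfolding key[OF ab, symmetric] by (rule Re_complex_of_real[symmetric])
    also have "\<dots> = (\<Sum>p\<in>?P. \<Sum>\<beta>\<in>(UNIV::bool set). \<phi> a (p, \<beta>) * \<psi> b (p, \<beta>))"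
      by (simp add: Re_sum \<phi>_def \<psi>_def UNIV_bool)
    also have "\<dots> = (\<Sum>i\<in>?P \<times> (UNIV::bool set). \<phi> a i * \<psi> b i)"
      by (simp add: sum.cartesian_product)
    finally show ?thesis .
  qed
  then show ?thesis by blast
qed


lemma sum_pm:
  assumes "finite S"
  shows "(\<Sum>z\<in>S. (if P z then 1 else -1) * (w z::real)) = (\<Sum>z\<in>{z\<in>S. P z}. w z) - (\<Sum>z\<in>{z\<in>S. \<not> P z}. w z)"
    and "(\<Sum>z\<in>S. w z) = (\<Sum>z\<in>{z\<in>S. P z}. w z) + (\<Sum>z\<in>{z\<in>S. \<not> P z}. w z)"
proof -
  have "(\<Sum>z\<in>S. (if P z then 1 else -1) * w z) = (\<Sum>z\<in>S. if P z then w z else - w z)"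
    by (rule sum.cong) auto
  also have "\<dots> = (\<Sum>z\<in>S \<inter> {x. P x}. w z) + (\<Sum>z\<in>S \<inter> - {x. P x}. - w z)"
    using assms by (rule sum.If_cases)
  also have "\<dots> = (\<Sum>z\<in>{z\<in>S. P z}. w z) - (\<Sum>z\<in>{z\<in>S. \<not> P z}. w z)"
    by (simp add: sum_negf Int_def Collect_conj_eq[symmetric] conj_commute)
  finally show "(\<Sum>z\<in>S. (if P z then 1 else -1) * (w z::real)) = (\<Sum>z\<in>{z\<in>S. P z}. w z) - (\<Sum>z\<in>{z\<in>S. \<not> P z}. w z)" .
  have "(\<Sum>z\<in>S. w z) = (\<Sum>z\<in>S. if P z then w z else w z)" by simp
  also have "\<dots> = (\<Sum>z\<in>S \<inter> {x. P x}. w z) + (\<Sum>z\<in>S \<inter> - {x. P x}. w z)"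
    using assms by (rule sum.If_cases)
  also have "\<dots> = (\<Sum>z\<in>{z\<in>S. P z}. w z) + (\<Sum>z\<in>{z\<in>S. \<not> P z}. w z)"
    by (simp add: Int_def Collect_conj_eq[symmetric] conj_commute)
  finally show "(\<Sum>z\<in>S. w z) = (\<Sum>z\<in>{z\<in>S. P z}. w z) + (\<Sum>z\<in>{z\<in>S. \<not> P z}. w z)" .
qed

definition JJ :: "nat \<Rightarrow> ((bool list \<times> bool list) \<times> bool) set" where
  "JJ c = (Ls c \<times> Ls c) \<times> (UNIV::bool set)"

lemma finite_JJ: "finite (JJ c)" by (simp add: JJ_def finite_Ls)
lemma card_JJ: "card (JJ c) = 2 ^ (2 * c + 1)"
  by (simp add: JJ_def card_cartesian_product card_Ls power_add mult_2)

lemma protocol_sign: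
  assumes "UQC_computes n g c"
  shows "\<exists>(\<phi>::(nat\<Rightarrow>bool) \<Rightarrow> _ \<Rightarrow> real) \<psi>. \<forall>a\<in>bits n. \<forall>b\<in>bits n.
     (g a b \<longrightarrow> (\<Sum>i\<in>JJ c. \<phi> a i * \<psi> b i) > 0) \<and> (\<not> g a b \<longrightarrow> (\<Sum>i\<in>JJ c. \<phi> a i * \<psi> b i) < 0)"
proof -
  obtain N own0 steps qo where qo: "qo < N" and vs: "valid_steps N (bits n) (bits n) own0 steps"
    and cc: "comm_cost steps = c"
    and acc: "\<forall>a\<in>bits n. \<forall>b\<in>bits n.
           (\<Sum>z\<in>{z\<in>Pow {0..<N}. (qo \<in> z) = g a b}. (cmod (snd (run_protocol N own0 steps a b) z))\<^sup>2) > 1/2"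
    using assms unfolding UQC_computes_def by blast
  let ?X = "bits n"
  let ?V0 = "\<lambda>(a::nat\<Rightarrow>bool) (b::nat\<Rightarrow>bool). (ket {} :: nat set \<Rightarrow> complex)"
  have d0: "decomp ?X ?X N own0 0 ?V0"
    unfolding decomp_def
  proof (intro exI ballI)
    fix a b z assume "z \<in> Pow {0..<N}"
    then have "z \<inter> owned N own0 False \<union> z \<inter> owned N own0 True = z" by (auto simp: owned_def)
    then have "(z = {}) = (z \<inter> owned N own0 False = {} \<and> z \<inter> owned N own0 True = {})"
      by auto
    then show "ket {} z = (\<Sum>xs\<in>Ls 0. (\<lambda>a xs s. if s = {} then 1 else 0) a xs (z \<inter> owned N own0 False) *
          (\<lambda>b xs s. if s = {} then 1 else (0::complex)) b xs (z \<inter> owned N own0 True))"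
      by (simp add: Ls_def ket_def)
  qed
  have d: "decomp ?X ?X N (ownf steps own0) c (\<lambda>a b. snd (run_protocol N own0 steps a b))"
    using decomp_run[OF d0 vs] cc by (simp add: run_protocol_def)
  obtain \<phi> \<psi> where phps: "\<forall>a\<in>?X. \<forall>b\<in>?X.
     (\<Sum>z\<in>Pow {0..<N}. (if qo \<in> z then 1 else -1) * (cmod (snd (run_protocol N own0 steps a b) z))\<^sup>2)
       = (\<Sum>i\<in>JJ c. \<phi> a i * \<psi> b i)"
    using bilinear[OF d qo] unfolding JJ_def by blast
  have fP: "finite (Pow {0..<N::nat})" by simp
  show ?thesis
  proof (rule exI[of _ \<phi>], rule exI[of _ \<psi>], intro ballI conjI impI)
    fix a b assume ab: "a \<in> ?X" "b \<in> ?X"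
    let ?w = "\<lambda>z. (cmod (snd (run_protocol N own0 steps a b) z))\<^sup>2"
    have nrm: "(\<Sum>z\<in>Pow {0..<N}. ?w z) = 1"
    proof -
      have "(\<Sum>z\<in>Pow {0..<N}. ?w z) = (\<Sum>z\<in>Pow {0..<N}. (cmod (ket {} z))\<^sup>2)"
        unfolding run_protocol_def by (rule norm_run[OF vs ab])
      also have "\<dots> = (\<Sum>z\<in>Pow {0..<N}. if z = {} then 1 else 0)"
        by (rule sum.cong) (auto simp: ket_def)
      also have "\<dots> = 1" by (simp add: sum.delta)
      finally show ?thesis .
    qed
    have D: "(\<Sum>i\<in>JJ c. \<phi> a i * \<psi> b i) = (\<Sum>z\<in>{z\<in>Pow {0..<N}. qo \<in> z}. ?w z) - (\<Sum>z\<in>{z\<in>Pow {0..<N}. qo \<notin> z}. ?w z)"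
      using phps ab sum_pm(1)[OF fP, of "\<lambda>z. qo \<in> z" ?w] by simp
    have T: "(\<Sum>z\<in>{z\<in>Pow {0..<N}. qo \<in> z}. ?w z) + (\<Sum>z\<in>{z\<in>Pow {0..<N}. qo \<notin> z}. ?w z) = 1"
      using nrm sum_pm(2)[OF fP, of ?w "\<lambda>z. qo \<in> z"] by simp
    have A: "(\<Sum>z\<in>{z\<in>Pow {0..<N}. (qo \<in> z) = g a b}. ?w z) > 1/2" using acc ab by blast
    { assume "g a b"
      then show "(\<Sum>i\<in>JJ c. \<phi> a i * \<psi> b i) > 0" using A D T by simp }
    { assume "\<not> g a b"
      then show "(\<Sum>i\<in>JJ c. \<phi> a i * \<psi> b i) < 0" using A D T by simp }
  qed
qed


lemma kernel:
  fixes A :: "'i \<Rightarrow> 'k \<Rightarrow> real"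
  assumes "finite J"
  shows "finite K \<Longrightarrow> card J < card K \<Longrightarrow>
    \<exists>w. (\<exists>j\<in>K. w j \<noteq> 0) \<and> (\<forall>i\<in>J. (\<Sum>j\<in>K. w j * A i j) = 0)"
  using assms
proof (induction J arbitrary: K A rule: finite_induct)
  case empty
  then obtain j where "j \<in> K" by fastforce
  then show ?case by (intro exI[of _ "\<lambda>_. 1"]) auto
next
  case (insert i0 J)
  show ?case
  proof (cases "\<forall>j\<in>K. A i0 j = 0")
    case True
    have "card J < card K" using insert by simp
    then obtain w where w: "\<exists>j\<in>K. w j \<noteq> 0" "\<forall>i\<in>J. (\<Sum>j\<in>K. w j * A i j) = 0"
      using insert.IH[OF insert.prems(1)] by blast
    then show ?thesis using True by (intro exI[of _ w]) auto
  next
    case False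
    then obtain j0 where j0: "j0 \<in> K" "A i0 j0 \<noteq> 0" by blast
    define K' where "K' = K - {j0}"
    have fK': "finite K'" using insert.prems by (simp add: K'_def)
    have cK': "card J < card K'" using insert j0 by (simp add: K'_def)
    define A' where "A' i j = A i j - A i j0 * A i0 j / A i0 j0" for i j
    obtain w' where w': "\<exists>j\<in>K'. w' j \<noteq> 0" "\<forall>i\<in>J. (\<Sum>j\<in>K'. w' j * A' i j) = 0"
      using insert.IH[OF fK' cK', of A'] by blast
    define w where "w j = (if j = j0 then - (\<Sum>j\<in>K'. w' j * A i0 j) / A i0 j0 else w' j)" for j
    have split: "(\<Sum>j\<in>K. w j * A i j) = w j0 * A i j0 + (\<Sum>j\<in>K'. w' j * A i j)" for i
    proof -
      have "(\<Sum>j\<in>K. w j * A i j) = w j0 * A i j0 + (\<Sum>j\<in>K'. w j * A i j)"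
        unfolding K'_def by (rule sum.remove[OF insert.prems(1) j0(1)])
      also have "(\<Sum>j\<in>K'. w j * A i j) = (\<Sum>j\<in>K'. w' j * A i j)"
        by (rule sum.cong) (auto simp: w_def K'_def)
      finally show ?thesis .
    qed
    have "\<forall>i\<in>insert i0 J. (\<Sum>j\<in>K. w j * A i j) = 0"
    proof
      fix i assume i: "i \<in> insert i0 J"
      show "(\<Sum>j\<in>K. w j * A i j) = 0"
      proof (cases "i = i0")
        case True
        then show ?thesis using j0 unfolding split by (simp add: w_def)
      next
        case False
        then have iJ: "i \<in> J" using i by simp
        have "(\<Sum>j\<in>K'. w' j * A' i j) = (\<Sum>j\<in>K'. w' j * A i j) - (A i j0 / A i0 j0) * (\<Sum>j\<in>K'. w' j * A i0 j)"
          by (simp add: A'_def sum_distrib_left sum_subtractf algebra_simps)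
        then have "(\<Sum>j\<in>K'. w' j * A i j) = (A i j0 / A i0 j0) * (\<Sum>j\<in>K'. w' j * A i0 j)"
          using w'(2) iJ by simp
        then show ?thesis using j0 unfolding split by (simp add: w_def)
      qed
    qed
    moreover have "\<exists>j\<in>K. w j \<noteq> 0"
      using w'(1) by (auto simp: w_def K'_def)
    ultimately show ?thesis by blast
  qed
qed

lemma sign_rank_bound:
  fixes \<phi> :: "nat set \<Rightarrow> 'j \<Rightarrow> real" and \<psi> :: "nat \<Rightarrow> 'j \<Rightarrow> real"
  assumes J: "finite J"
    and sh: "\<forall>T. T \<subseteq> {0..<s} \<longrightarrow> (\<forall>j<s. (j \<in> T \<longrightarrow> (\<Sum>i\<in>J. \<phi> T i * \<psi> j i) > 0) \<and>
                                         (j \<notin> T \<longrightarrow> (\<Sum>i\<in>J. \<phi> T i * \<psi> j i) < 0))"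
  shows "s \<le> card J"
proof (rule ccontr)
  assume "\<not> s \<le> card J"
  then have "card J < card {0..<s}" by simp
  then obtain w where w: "\<exists>j\<in>{0..<s}. w j \<noteq> 0" "\<forall>i\<in>J. (\<Sum>j\<in>{0..<s}. w j * \<psi> j i) = 0"
    using kernel[OF J, of "{0..<s}" "\<lambda>i j. \<psi> j i"] by auto
  define T where "T = {j. j < s \<and> w j \<ge> 0}"
  have T: "T \<subseteq> {0..<s}" by (auto simp: T_def)
  have "(\<Sum>j\<in>{0..<s}. w j * (\<Sum>i\<in>J. \<phi> T i * \<psi> j i)) = (\<Sum>i\<in>J. \<phi> T i * (\<Sum>j\<in>{0..<s}. w j * \<psi> j i))"
    by (simp add: sum_distrib_left mult_ac sum.swap[of _ "{0..<s}"])
  also have "\<dots> = 0" using w(2) by simp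
  finally have z: "(\<Sum>j\<in>{0..<s}. w j * (\<Sum>i\<in>J. \<phi> T i * \<psi> j i)) = 0" .
  obtain j0 where j0: "j0 < s" "w j0 \<noteq> 0" using w(1) by auto
  have nn: "\<forall>j\<in>{0..<s}. 0 \<le> w j * (\<Sum>i\<in>J. \<phi> T i * \<psi> j i)"
  proof
    fix j assume "j \<in> {0..<s}"
    then have j: "j < s" by simp
    show "0 \<le> w j * (\<Sum>i\<in>J. \<phi> T i * \<psi> j i)"
    proof (cases "w j \<ge> 0")
      case True
      then have "j \<in> T" using j by (simp add: T_def)
      then show ?thesis using sh T j True by (simp add: less_imp_le)
    next
      case False
      then have "j \<notin> T" by (simp add: T_def)
      then have "(\<Sum>i\<in>J. \<phi> T i * \<psi> j i) < 0" using sh T j by blast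
      then show ?thesis using False by (simp add: mult_nonpos_nonpos less_imp_le)
    qed
  qed
  have "0 < w j0 * (\<Sum>i\<in>J. \<phi> T i * \<psi> j0 i)"
  proof (cases "w j0 > 0")
    case True
    then have "j0 \<in> T" using j0 by (simp add: T_def)
    then show ?thesis using sh T j0 True by simp
  next
    case False
    then have neg: "w j0 < 0" using j0 by simp
    then have "j0 \<notin> T" by (simp add: T_def)
    then have "(\<Sum>i\<in>J. \<phi> T i * \<psi> j0 i) < 0" using sh T j0 by blast
    then show ?thesis using neg by (simp add: mult_neg_neg)
  qed
  then have "0 < (\<Sum>j\<in>{0..<s}. w j * (\<Sum>i\<in>J. \<phi> T i * \<psi> j i))"
    using nn j0 by (intro sum_pos2[of "{0..<s}" j0]) auto
  then show False using z by simp
qed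


lemma OMB_single:
  assumes "k \<in> {1..n}"
  shows "OMB n (\<lambda>i. i = k) = odd k"
proof -
  have "(GREATEST i. i \<in> {1..n} \<and> i = k) = k"
    using assms by (intro Greatest_equality) auto
  then show ?thesis using assms unfolding OMB_def by auto
qed

lemma OMB_cong:
  assumes "\<forall>i\<in>{1..n}. x i = y i"
  shows "OMB n x = OMB n y"
proof -
  have "(\<lambda>i. i \<in> {1..n} \<and> x i) = (\<lambda>i. i \<in> {1..n} \<and> y i)" using assms by auto
  moreover have "(\<exists>i\<in>{1..n}. x i) = (\<exists>i\<in>{1..n}. y i)" using assms by auto
  ultimately show ?thesis unfolding OMB_def by simp
qed

lemma DOMB_lower:
  assumes "UQC_computes n (DOMB n) c" "0 < n"
  shows "(log 2 (real n) - 3) / 2 \<le> real c"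
proof -
  obtain \<phi> \<psi> where ph: "\<forall>a\<in>bits n. \<forall>b\<in>bits n.
     (DOMB n a b \<longrightarrow> (\<Sum>i\<in>JJ c. \<phi> a i * \<psi> b i) > (0::real)) \<and> (\<not> DOMB n a b \<longrightarrow> (\<Sum>i\<in>JJ c. \<phi> a i * \<psi> b i) < 0)"
    using protocol_sign[OF assms(1)] by blast
  define s where "s = n div 2"
  define bb where "bb j = (\<lambda>i::nat. i = 2*j+1 \<or> i = 2*j+2)" for j
  define aa where "aa T = (\<lambda>i::nat. \<exists>j<s. (j \<in> T \<and> i = 2*j+1) \<or> (j \<notin> T \<and> i = 2*j+2))" for T
  have bb_bits: "bb j \<in> bits n" if "j < s" for j
    using that by (auto simp: bb_def bits_def s_def)
  have aa_bits: "aa T \<in> bits n" for T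
    by (auto simp: aa_def bits_def s_def)
  have key: "DOMB n (aa T) (bb j) = (j \<in> T)" if "j < s" for T j
  proof -
    define k where "k = (if j \<in> T then 2*j+1 else 2*j+2)"
    have e: "(\<lambda>i. aa T i \<and> bb j i) = (\<lambda>i. i = k)"
    proof
      fix i
      show "(aa T i \<and> bb j i) = (i = k)"
      proof
        assume h: "aa T i \<and> bb j i"
        then obtain j' where j': "j' < s" "(j' \<in> T \<and> i = 2*j'+1) \<or> (j' \<notin> T \<and> i = 2*j'+2)"
          unfolding aa_def by blast
        have "i = 2*j+1 \<or> i = 2*j+2" using h by (simp add: bb_def)
        moreover have "i = 2*j'+1 \<or> i = 2*j'+2" using j' by blast
        ultimately have "j' = j" by presburger
        then show "i = k" using j' by (auto simp: k_def)
      next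
        assume "i = k"
        then show "aa T i \<and> bb j i" using that by (auto simp: aa_def bb_def k_def)
      qed
    qed
    have k: "k \<in> {1..n}" using that by (auto simp: k_def s_def)
    show ?thesis unfolding DOMB_def e using OMB_single[OF k] by (simp add: k_def)
  qed
  have "s \<le> card (JJ c)"
  proof (rule sign_rank_bound[OF finite_JJ, of s "\<lambda>T. \<phi> (aa T)" "\<lambda>j. \<psi> (bb j)"], intro allI impI conjI)
    fix T j assume "T \<subseteq> {0..<s}" "j < s" 
    { assume "j \<in> T" then show "(\<Sum>i\<in>JJ c. \<phi> (aa T) i * \<psi> (bb j) i) > 0"
        using ph aa_bits bb_bits[OF \<open>j < s\<close>] key[OF \<open>j < s\<close>] by blast }
    { assume "j \<notin> T" then show "(\<Sum>i\<in>JJ c. \<phi> (aa T) i * \<psi> (bb j) i) < 0"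
        using ph aa_bits bb_bits[OF \<open>j < s\<close>] key[OF \<open>j < s\<close>] by blast }
  qed
  then have "s \<le> 2 ^ (2 * c + 1)" by (simp add: card_JJ)
  then have "n \<le> 2 * 2 ^ (2 * c + 1) + 1" by (simp add: s_def)
  also have "\<dots> \<le> 2 ^ (2 * c + 3)"
    using one_le_power[of "2::nat" "2*c"] by (simp add: power_add)
  finally have "real n \<le> 2 ^ (2 * c + 3)" by (simp flip: of_nat_le_iff)
  then have "log 2 (real n) \<le> log 2 (2 ^ (2 * c + 3))"
    using assms(2) by (subst log_le_cancel_iff) auto
  also have "\<dots> = real (2 * c + 3)" by (simp add: log_nat_power)
  finally show ?thesis by simp
qed


definition pmat :: "(nat set \<Rightarrow> nat set) \<Rightarrow> nat set \<Rightarrow> nat set \<Rightarrow> complex" where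
  "pmat \<pi> s y = (if s = \<pi> y then 1 else 0)"

lemma perm_unitary:
  assumes inv: "\<forall>y\<in>Pow S. \<pi> y \<in> Pow S \<and> \<pi> (\<pi> y) = y" and fS: "finite S"
  shows "unitary_on (Pow S) (pmat \<pi>)"
  unfolding unitary_on_def
proof (intro conjI ballI)
  fix i j assume i: "i \<in> Pow S" and j: "j \<in> Pow S"
  have e: "k \<in> Pow S \<Longrightarrow> (i = \<pi> k) = (k = \<pi> i)" for k using inv i by metis
  have "(\<Sum>k\<in>Pow S. pmat \<pi> i k * cnj (pmat \<pi> j k)) = (\<Sum>k\<in>Pow S. if k = \<pi> i then (if j = \<pi> k then 1 else 0) else 0)"
    by (rule sum.cong) (auto simp: pmat_def e)
  also have "\<dots> = (if j = \<pi> (\<pi> i) then 1 else 0)" using inv i fS by (simp add: sum.delta)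
  also have "\<dots> = (if i = j then 1 else 0)" using inv i by auto
  finally show "(\<Sum>k\<in>Pow S. pmat \<pi> i k * cnj (pmat \<pi> j k)) = (if i = j then 1 else 0)" .
  have "(\<Sum>k\<in>Pow S. cnj (pmat \<pi> k i) * pmat \<pi> k j) = (\<Sum>k\<in>Pow S. if k = \<pi> i then (if k = \<pi> j then 1 else 0) else 0)"
    by (rule sum.cong) (auto simp: pmat_def)
  also have "\<dots> = (if \<pi> i = \<pi> j then 1 else 0)" using inv i fS by (simp add: sum.delta)
  also have "\<dots> = (if i = j then 1 else 0)" using inv i j by metis
  finally show "(\<Sum>k\<in>Pow S. cnj (pmat \<pi> k i) * pmat \<pi> k j) = (if i = j then 1 else 0)" .
qed

lemma setid: "P \<subseteq> S \<Longrightarrow> (z - S = A - S \<and> z \<inter> S = P) = (z = (A - S) \<union> P)"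
  by (auto; blast)

lemma local_op_perm_ket:
  assumes S: "S \<subseteq> {0..<N}" and z0: "z0 \<subseteq> {0..<N}" and pS: "\<pi> (z0 \<inter> S) \<subseteq> S"
  shows "local_op N S (pmat \<pi>) (ket z0) = ket ((z0 - S) \<union> \<pi> (z0 \<inter> S))"
proof
  fix z
  have "local_op N S (pmat \<pi>) (ket z0) z =
     (\<Sum>z'\<in>Pow {0..<N}. if z' = z0 then (if z - S = z' - S then pmat \<pi> (z \<inter> S) (z' \<inter> S) else 0) else 0)"
    unfolding local_op_def by (rule sum.cong) (simp_all add: ket_def)
  also have "\<dots> = (if z - S = z0 - S then pmat \<pi> (z \<inter> S) (z0 \<inter> S) else 0)"
    using z0 by (simp add: sum.delta)
  also have "\<dots> = (if z - S = z0 - S \<and> z \<inter> S = \<pi> (z0 \<inter> S) then 1 else 0)"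
    by (simp add: pmat_def)
  also have "\<dots> = ket ((z0 - S) \<union> \<pi> (z0 \<inter> S)) z"
    unfolding ket_def setid[OF pS] by simp
  finally show "local_op N S (pmat \<pi>) (ket z0) z = ket ((z0 - S) \<union> \<pi> (z0 \<inter> S)) z" .
qed

lemma fold_sends:
  "fold (cstep_sem N a b) (map Send [0..<m]) (own, v) = (\<lambda>q. if q < m then \<not> own q else own q, v)"
  by (induction m) (auto simp: fun_upd_def fun_eq_iff)

lemma valid_sends:
  "m \<le> N \<Longrightarrow> valid_steps N X Y (\<lambda>q. if q < m then \<not> own q else own q) st \<Longrightarrow>
   valid_steps N X Y own (map Send [0..<m] @ st)"
proof (induction m arbitrary: st)
  case 0
  then show ?case by simp
next
  case (Suc m)
  let ?f = "\<lambda>q. if q < m then \<not> own q else own q"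
  have fg: "?f(m := \<not> ?f m) = (\<lambda>q. if q < Suc m then \<not> own q else own q)"
    by (rule ext) auto
  have "valid_steps N X Y ?f (Send m # st)"
    using Suc.prems by (simp only: valid_steps.simps fg) simp
  then show ?case using Suc by simp
qed

lemma symdiff_pow: "y \<subseteq> S \<Longrightarrow> E \<subseteq> S \<Longrightarrow> (y - E) \<union> (E - y) \<subseteq> S" by blast

lemma DOMB_exists:
  assumes "0 < n"
  shows "\<exists>c. UQC_computes n (DOMB n) c"
proof -
  define N where "N = Suc n"
  define own0 where "own0 = (\<lambda>q::nat. q = n)"
  define EA where "EA a = {q. q < n \<and> a (Suc q)}" for a :: "nat \<Rightarrow> bool"
  define \<pi>a where "\<pi>a a y = (y - EA a) \<union> (EA a - y)" for a y
  define cond where "cond b y = OMB n (\<lambda>i. (i - 1) \<in> y \<and> b i)" for b y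
  define \<pi>b where "\<pi>b b y = (if cond b y then (y - {n}) \<union> ({n} - y) else y)" for b y
  define steps where "steps = Local False (\<lambda>a. pmat (\<pi>a a)) # (map Send [0..<n] @ [Local True (\<lambda>b. pmat (\<pi>b b))])"
  define own1 where "own1 = (\<lambda>q. if q < n then \<not> own0 q else own0 q)"
  have oA: "owned N own0 False = {0..<n}" by (auto simp: owned_def own0_def N_def)
  have oB: "owned N own1 True = {0..<N}" by (auto simp: owned_def own0_def own1_def N_def)
  have condn: "cond b ((y - {n}) \<union> ({n} - y)) = cond b y" for b y
    unfolding cond_def by (rule OMB_cong) auto
  have ua: "unitary_on (Pow {0..<n}) (pmat (\<pi>a a))" for a
    by (rule perm_unitary) (auto simp: \<pi>a_def EA_def)
  have ub: "unitary_on (Pow {0..<N}) (pmat (\<pi>b b))" for b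
    by (rule perm_unitary) (auto simp: \<pi>b_def condn N_def)
  have vs: "valid_steps N (bits n) (bits n) own0 steps"
    unfolding steps_def using ua ub oA oB
    by (simp add: own1_def[symmetric]) (rule valid_sends, auto simp: N_def own1_def)
  have run: "snd (run_protocol N own0 steps a b) = ket (\<pi>b b (EA a))" for a b
  proof -
    have p1: "\<pi>a a ({} \<inter> {0..<n}) \<subseteq> {0..<n}" by (auto simp: \<pi>a_def EA_def)
    have s1': "local_op N {0..<n} (pmat (\<pi>a a)) (ket {}) = ket (({} - {0..<n}) \<union> \<pi>a a ({} \<inter> {0..<n}))"
      apply (rule local_op_perm_ket[of "{0..<n}" N "{}" "\<pi>a a"])
        apply (simp add: N_def)
       apply simp
      apply (rule p1)
      done
    have s1: "local_op N {0..<n} (pmat (\<pi>a a)) (ket {}) = ket (EA a)"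
      using s1' by (simp add: \<pi>a_def)
    have p3: "\<pi>b b (EA a \<inter> {0..<N}) \<subseteq> {0..<N}" by (auto simp: \<pi>b_def EA_def N_def)
    have s3': "local_op N {0..<N} (pmat (\<pi>b b)) (ket (EA a)) = ket ((EA a - {0..<N}) \<union> \<pi>b b (EA a \<inter> {0..<N}))"
      apply (rule local_op_perm_ket[of "{0..<N}" N "EA a" "\<pi>b b"])
        apply simp
       apply (auto simp: N_def EA_def)[1]
      apply (rule p3)
      done
    have ea: "EA a \<subseteq> {0..<N}" by (auto simp: EA_def N_def)
    have s3: "local_op N {0..<N} (pmat (\<pi>b b)) (ket (EA a)) = ket (\<pi>b b (EA a))"
      using s3' ea by (simp add: Int_absorb2 Diff_eq_empty_iff[THEN iffD2])
    show ?thesis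
      unfolding run_protocol_def steps_def
      by (simp add: fold_sends oA s1 own1_def[symmetric] oB s3)
  qed
  have "UQC_computes n (DOMB n) (comm_cost steps)"
    unfolding UQC_computes_def
  proof (intro exI conjI ballI)
    show "n < N" by (simp add: N_def)
    show "valid_steps N (bits n) (bits n) own0 steps" by (rule vs)
    fix a b assume ab: "a \<in> bits n" "b \<in> bits n"
    let ?Z = "\<pi>b b (EA a)"
    have Z: "?Z \<in> Pow {0..<N}" by (auto simp: \<pi>b_def EA_def N_def)
    have cd: "cond b (EA a) = DOMB n a b"
      unfolding cond_def DOMB_def by (rule OMB_cong) (auto simp: EA_def)
    have nZ: "(n \<in> ?Z) = DOMB n a b" by (auto simp: \<pi>b_def EA_def cd[symmetric])
    have "(\<Sum>z\<in>{z\<in>Pow {0..<N}. (n \<in> z) = DOMB n a b}. (cmod (ket ?Z z))\<^sup>2)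
        = (\<Sum>z\<in>{z\<in>Pow {0..<N}. (n \<in> z) = DOMB n a b}. if z = ?Z then 1 else 0)"
      by (rule sum.cong) (auto simp: ket_def)
    also have "\<dots> = 1" using Z nZ by (simp add: sum.delta)
    finally show "(\<Sum>z\<in>{z\<in>Pow {0..<N}. (n \<in> z) = DOMB n a b}. (cmod (snd (run_protocol N own0 steps a b) z))\<^sup>2) > 1/2"
      by (simp add: run)
  qed simp
  then show ?thesis by blast
qed


lemma OMB_0: "OMB 0 x = False"
  by (simp add: OMB_def)

lemma OMB_Suc: "OMB (Suc m) x = (if x (Suc m) then odd (Suc m) else OMB m x)"
proof (cases "x (Suc m)")
  case True
  have "(GREATEST i. i \<in> {1..Suc m} \<and> x i) = Suc m"
    using True by (intro Greatest_equality) auto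
  then show ?thesis using True unfolding OMB_def by auto
next
  case False
  have e: "(\<lambda>i. i \<in> {1..Suc m} \<and> x i) = (\<lambda>i. i \<in> {1..m} \<and> x i)"
    using False by (auto simp: le_Suc_eq)
  have e2: "(\<exists>i\<in>{1..Suc m}. x i) = (\<exists>i\<in>{1..m}. x i)"
    using False by (auto simp: le_Suc_eq)
  show ?thesis using False unfolding OMB_def e e2 by simp
qed

definition TT :: "nat \<Rightarrow> (nat \<Rightarrow> bool) \<Rightarrow> real" where
  "TT m x = (\<Sum>i\<in>{1..m}. if x i then (if odd i then 1 else -1) * 2 ^ (i + 1) else 0)"

lemma TT_Suc: "TT (Suc m) x = TT m x + (if x (Suc m) then (if odd (Suc m) then 1 else -1) * 2 ^ (Suc m + 1) else 0)"
  by (simp add: TT_def)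

lemma TT_props:
  "\<bar>TT m x\<bar> \<le> 2 ^ (m + 2) - 4 \<and>
   ((\<exists>i\<in>{1..m}. x i) \<longrightarrow> (OMB m x \<longrightarrow> TT m x \<ge> 4) \<and> (\<not> OMB m x \<longrightarrow> TT m x \<le> -4)) \<and>
   ((\<not> (\<exists>i\<in>{1..m}. x i)) \<longrightarrow> TT m x = 0 \<and> \<not> OMB m x)"
proof (induction m)
  case 0
  then show ?case by (simp add: TT_def OMB_0)
next
  case (Suc m)
  have ex: "(\<exists>i\<in>{1..Suc m}. x i) = (x (Suc m) \<or> (\<exists>i\<in>{1..m}. x i))"
  proof
    assume "x (Suc m) \<or> (\<exists>i\<in>{1..m}. x i)"
    then show "\<exists>i\<in>{1..Suc m}. x i"
    proof
      assume "x (Suc m)" then show ?thesis by (intro bexI[of _ "Suc m"]) auto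
    qed auto
  qed (auto simp: le_Suc_eq)
  have p: "(2::real) ^ (Suc m + 2) = 2 * 2 ^ (m + 2)" by simp
  have p2: "(2::real) ^ (Suc m + 1) = 2 ^ (m + 2)" by simp
  have pos: "(4::real) \<le> 2 ^ (m + 2)"
    using power_increasing[of 2 "m+2" "2::real"] by simp
  show ?case
  proof (cases "x (Suc m)")
    case True
    then show ?thesis using Suc.IH pos unfolding TT_Suc OMB_Suc ex p p2
      by (cases "odd (Suc m)") (auto simp: abs_le_iff)
  next
    case False
    then show ?thesis using Suc.IH pos unfolding TT_Suc OMB_Suc ex p p2
      by (auto simp: abs_le_iff)
  qed
qed


lemma householder:
  fixes S :: "'a set" and v :: "'a \<Rightarrow> real"
  assumes fS: "finite S" and e: "e \<in> S" and nv: "(\<Sum>s\<in>S. (v s)\<^sup>2) = 1" and ve: "v e \<noteq> 1"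
  defines "u \<equiv> \<lambda>s. (if s = e then 1 else 0) - v s"
  defines "Nn \<equiv> (\<Sum>s\<in>S. (u s)\<^sup>2)"
  defines "H \<equiv> \<lambda>i j. complex_of_real ((if i = j then 1 else 0) - 2 * u i * u j / Nn)"
  shows "unitary_on S H" and "\<forall>s\<in>S. H s e = complex_of_real (v s)"
proof -
  have Nn: "Nn = 2 * u e"
  proof -
    have "Nn = (\<Sum>s\<in>S. (if s = e then 1 else 0) - 2 * (if s = e then v s else 0) + (v s)\<^sup>2)"
      unfolding Nn_def u_def by (rule sum.cong) (auto simp: power2_eq_square algebra_simps)
    also have "\<dots> = 1 - 2 * v e + 1"
      using fS e nv by (simp add: sum.distrib sum_subtractf sum.delta' sum_distrib_left[symmetric])
    finally show ?thesis by (simp add: u_def)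
  qed
  have ue: "u e \<noteq> 0" using ve by (simp add: u_def)
  have Nn0: "Nn \<noteq> 0" using Nn ue by simp
  have R: "(\<Sum>k\<in>S. ((if i = k then 1 else 0) - 2 * u i * u k / Nn) * ((if j = k then 1 else 0) - 2 * u j * u k / Nn))
          = (if i = j then 1 else 0)" if ij: "i \<in> S" "j \<in> S" for i j
  proof -
    have "(\<Sum>k\<in>S. ((if i = k then 1 else 0) - 2 * u i * u k / Nn) * ((if j = k then 1 else 0) - 2 * u j * u k / Nn))
      = (\<Sum>k\<in>S. (if i = k then (if j = k then 1 else 0) else 0) - (if i = k then 2 * u j * u k / Nn else 0)
             - (if j = k then 2 * u i * u k / Nn else 0) + (4 * u i * u j / Nn ^ 2) * (u k)\<^sup>2)"
      by (rule sum.cong) (auto simp: power2_eq_square algebra_simps)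
    also have "\<dots> = (if i = j then 1 else 0) - 2 * u j * u i / Nn - 2 * u i * u j / Nn + (4 * u i * u j / Nn ^ 2) * Nn"
    proof -
      have F: "(\<Sum>k\<in>S. (4 * u i * u j / Nn ^ 2) * (u k)\<^sup>2) = (4 * u i * u j / Nn ^ 2) * Nn"
        by (simp only: sum_distrib_left[symmetric] Nn_def)
      show ?thesis
        apply (simp only: sum.distrib sum_subtractf F)
        using fS ij by (simp add: sum.delta)
    qed
    also have "\<dots> = (if i = j then 1 else 0)"
      using Nn0 by (simp add: power2_eq_square field_simps)
    finally show ?thesis .
  qed
  show "unitary_on S H"
    unfolding unitary_on_def
  proof (intro conjI ballI)
    fix i j assume ij: "i \<in> S" "j \<in> S"
    have "(\<Sum>k\<in>S. H i k * cnj (H j k)) = complex_of_real (\<Sum>k\<in>S. ((if i = k then 1 else 0) - 2 * u i * u k / Nn) * ((if j = k then 1 else 0) - 2 * u j * u k / Nn))"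
      unfolding H_def of_real_sum by (rule sum.cong) auto
    also have "\<dots> = (if i = j then 1 else 0)" using R[OF ij] by simp
    finally show "(\<Sum>k\<in>S. H i k * cnj (H j k)) = (if i = j then 1 else 0)" .
    have "(\<Sum>k\<in>S. cnj (H k i) * H k j) = complex_of_real (\<Sum>k\<in>S. ((if i = k then 1 else 0) - 2 * u i * u k / Nn) * ((if j = k then 1 else 0) - 2 * u j * u k / Nn))"
      unfolding H_def of_real_sum by (rule sum.cong) (auto simp: mult_ac)
    also have "\<dots> = (if i = j then 1 else 0)" using R[OF ij] by simp
    finally show "(\<Sum>k\<in>S. cnj (H k i) * H k j) = (if i = j then 1 else 0)" .
  qed
  show "\<forall>s\<in>S. H s e = complex_of_real (v s)"
  proof
    fix s assume "s \<in> S"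
    have "2 * u s * u e / Nn = u s" using Nn ue by simp
    then show "H s e = complex_of_real (v s)" unfolding H_def by (simp add: u_def)
  qed
qed


lemma UQ_not0:
  assumes n: "0 < n"
  shows "\<not> UQ_computes n (OMB n) 0"
proof
  assume "UQ_computes n (OMB n) 0"
  then obtain w U0 out where w: "0 < w" and U0: "unitary_on (QB n w) U0"
    and acc: "\<forall>x\<in>bits n. (\<Sum>s\<in>{s\<in>QB n w. out s = OMB n x}. (cmod (query_final n w x U0 [] s))\<^sup>2) > 1/2"
    unfolding UQ_computes_def by auto
  let ?S = "QB n w"
  let ?e = "(1::nat, False, 0::nat)"
  define fin where "fin = apply_on ?S U0 (ket ?e)"
  have qf: "query_final n w x U0 [] = fin" for x by (simp add: query_final_def fin_def)
  have fS: "finite ?S" by (simp add: QB_def)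
  have eS: "?e \<in> ?S" using n w by (simp add: QB_def)
  have tot: "(\<Sum>s\<in>?S. (cmod (fin s))\<^sup>2) = 1"
  proof -
    have "(\<Sum>s\<in>?S. (cmod (fin s))\<^sup>2) = (\<Sum>j\<in>?S. (cmod (ket ?e j))\<^sup>2)"
      unfolding fin_def apply_on_def
      by (rule norm_pres[OF fS]) (use U0 in \<open>simp add: unitary_on_def\<close>)
    also have "\<dots> = (\<Sum>j\<in>?S. if j = ?e then 1 else 0)"
      by (rule sum.cong) (auto simp: ket_def)
    also have "\<dots> = 1" using fS eS by (simp add: sum.delta)
    finally show ?thesis .
  qed
  have x0: "(\<lambda>_. False) \<in> bits n" by (simp add: bits_def)
  have x1: "(\<lambda>i. i = 1) \<in> bits n" using n by (simp add: bits_def)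
  have o0: "OMB n (\<lambda>_. False) = False" by (simp add: OMB_def)
  have o1: "OMB n (\<lambda>i. i = 1) = True" using OMB_single[of 1 n] n by simp
  have A0: "(\<Sum>s\<in>{s\<in>?S. \<not> out s}. (cmod (fin s))\<^sup>2) > 1/2"
    using acc x0 o0 qf by force
  have A1: "(\<Sum>s\<in>{s\<in>?S. out s}. (cmod (fin s))\<^sup>2) > 1/2"
    using acc x1 o1 qf by force
  have "(\<Sum>s\<in>?S. (cmod (fin s))\<^sup>2) = (\<Sum>s\<in>{s\<in>?S. out s}. (cmod (fin s))\<^sup>2) + (\<Sum>s\<in>{s\<in>?S. \<not> out s}. (cmod (fin s))\<^sup>2)"
    by (rule sum_pm(2)[OF fS])
  then show False using tot A0 A1 by simp
qed

lemma sum_QB3: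
  "(\<Sum>s\<in>QB n 3. g s) = (\<Sum>i\<in>{1..n}. g (i, False, 0) + g (i, False, 1) + g (i, False, 2)
                                     + g (i, True, 0) + g (i, True, 1) + g (i, True, 2))"
proof -
  have "(\<Sum>s\<in>QB n 3. g s) = (\<Sum>i\<in>{1..n}. \<Sum>p\<in>(UNIV::bool set) \<times> {0..<3::nat}. g (i, p))"
    unfolding QB_def by (simp add: sum.cartesian_product split_def)
  also have "\<dots> = (\<Sum>i\<in>{1..n}. \<Sum>b\<in>(UNIV::bool set). \<Sum>z\<in>{0..<3::nat}. g (i, b, z))"
    by (simp add: sum.cartesian_product split_def)
  also have "\<dots> = (\<Sum>i\<in>{1..n}. g (i, False, 0) + g (i, False, 1) + g (i, False, 2)
                                     + g (i, True, 0) + g (i, True, 1) + g (i, True, 2))"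
    by (rule sum.cong) (simp_all add: UNIV_bool numeral_3_eq_3 numeral_2_eq_2 atLeast0_lessThan_Suc algebra_simps)
  finally show ?thesis .
qed



lemma UQ_1:
  assumes n: "0 < n"
  shows "UQ_computes n (OMB n) 1"
proof -
  let ?S = "QB n 3"
  let ?e = "(1::nat, False, 0::nat)"
  define wt :: "nat \<times> bool \<times> nat \<Rightarrow> real" where
    "wt s = (case s of (i, b, z) \<Rightarrow> if b then 0 else (if z = 2 then (if i = 1 then 1 else 0) else 2 ^ i))" for s
  define W where "W = (\<Sum>s\<in>?S. wt s)"
  define v where "v s = sqrt (wt s / W)" for s
  have fS: "finite ?S" by (simp add: QB_def)
  have eS: "?e \<in> ?S" using n by (simp add: QB_def)
  have e1S: "(1::nat, False, 1::nat) \<in> ?S" using n by (simp add: QB_def)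
  have wt0: "wt s \<ge> 0" for s by (auto simp: wt_def split: prod.splits)
  have W4: "W \<ge> 4"
  proof -
    have "(\<Sum>s\<in>{?e, (1, False, 1)}. wt s) \<le> W"
      unfolding W_def by (rule sum_mono2[OF fS]) (use eS e1S wt0 in auto)
    then show ?thesis by (simp add: wt_def)
  qed
  have Wpos: "W > 0" using W4 by simp
  have nv: "(\<Sum>s\<in>?S. (v s)\<^sup>2) = 1"
  proof -
    have "(\<Sum>s\<in>?S. (v s)\<^sup>2) = (\<Sum>s\<in>?S. wt s / W)"
      by (rule sum.cong) (use wt0 Wpos in \<open>auto simp: v_def\<close>)
    also have "\<dots> = 1" using Wpos by (simp add: sum_divide_distrib[symmetric] W_def)
    finally show ?thesis .
  qed
  have ve: "v ?e \<noteq> 1"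
  proof
    assume "v ?e = 1"
    then have "sqrt (2 / W) = 1" by (simp add: v_def wt_def)
    then have "2 / W = 1" by simp
    then show False using W4 by (simp add: field_simps)
  qed
  define u where "u = (\<lambda>s. (if s = ?e then 1 else 0) - v s)"
  define Nn where "Nn = (\<Sum>s\<in>?S. (u s)\<^sup>2)"
  define H where "H = (\<lambda>i j. complex_of_real ((if i = j then 1 else 0) - 2 * u i * u j / Nn))"
  have HU: "unitary_on ?S H" and He: "\<forall>s\<in>?S. H s ?e = complex_of_real (v s)"
    using householder[OF fS eS nv ve] unfolding H_def Nn_def u_def by blast+
  define U1 where "U1 = (\<lambda>(s::nat \<times> bool \<times> nat) t. if s = t then (1::complex) else 0)"
  have U1U: "unitary_on ?S U1"
    unfolding unitary_on_def U1_def
  proof (intro conjI ballI)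
    fix i j assume ij: "i \<in> ?S" "j \<in> ?S"
    have "(\<Sum>k\<in>?S. (if i = k then 1 else 0) * cnj (if j = k then 1 else 0)) = (\<Sum>k\<in>?S. if k = i then (if j = k then 1 else 0) else (0::complex))"
      by (rule sum.cong) auto
    then show "(\<Sum>k\<in>?S. (if i = k then 1 else 0) * cnj (if j = k then 1 else 0)) = (if i = j then 1 else (0::complex))"
      using fS ij by (simp add: sum.delta)
    have "(\<Sum>k\<in>?S. cnj (if k = i then 1 else 0) * (if k = j then 1 else 0)) = (\<Sum>k\<in>?S. if k = i then (if k = j then 1 else 0) else (0::complex))"
      by (rule sum.cong) auto
    then show "(\<Sum>k\<in>?S. cnj (if k = i then 1 else 0) * (if k = j then 1 else 0)) = (if i = j then 1 else (0::complex))"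
      using fS ij by (simp add: sum.delta)
  qed
  define out where "out = (\<lambda>(i::nat, b::bool, z::nat). if z = 2 then False else if b then odd i else z = 0)"
  define fl where "fl x = (\<lambda>(i::nat, b::bool, z::nat). (i, b \<noteq> x i, z))" for x :: "nat \<Rightarrow> bool"
  have flS: "fl x s \<in> ?S" if "s \<in> ?S" for x s using that by (auto simp: fl_def QB_def)
  have flfl: "fl x (fl x s) = s" for x s by (auto simp: fl_def split: prod.splits)
  have fin: "query_final n 3 x H [U1] s = complex_of_real (v (fl x s))" if s: "s \<in> ?S" for x s
  proof -
    have a0: "apply_on ?S H (ket ?e) t = complex_of_real (v t)" if "t \<in> ?S" for t
    proof -
      have "apply_on ?S H (ket ?e) t = (\<Sum>j\<in>?S. if j = ?e then H t j else 0)"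
        unfolding apply_on_def by (rule sum.cong) (auto simp: ket_def)
      also have "\<dots> = H t ?e" using fS eS by (simp add: sum.delta)
      finally show ?thesis using He that by simp
    qed
    have q: "query_op x (apply_on ?S H (ket ?e)) t = complex_of_real (v (fl x t))" if "t \<in> ?S" for t
      using a0[OF flS[OF that, of x]] by (cases t) (auto simp: query_op_def fl_def)
    have "query_final n 3 x H [U1] s = apply_on ?S U1 (query_op x (apply_on ?S H (ket ?e))) s"
      by (simp add: query_final_def)
    also have "\<dots> = (\<Sum>j\<in>?S. if j = s then query_op x (apply_on ?S H (ket ?e)) j else 0)"
      unfolding apply_on_def U1_def by (rule sum.cong) auto
    also have "\<dots> = query_op x (apply_on ?S H (ket ?e)) s" using fS s by (simp add: sum.delta')
    finally show ?thesis using q[OF s] by simp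
  qed
  have prob: "(cmod (query_final n 3 x H [U1] s))\<^sup>2 = wt (fl x s) / W" if s: "s \<in> ?S" for x s
    using fin[OF s] wt0 Wpos by (simp add: v_def)
  show ?thesis
    unfolding UQ_computes_def
  proof (intro exI conjI ballI)
    show "0 < (3::nat)" by simp
    show "length [U1] = 1" by simp
    show "unitary_on ?S H" by (rule HU)
    show "\<And>U. U \<in> set [U1] \<Longrightarrow> unitary_on ?S U" using U1U by simp
    fix x assume x: "x \<in> bits n"
    let ?p = "\<lambda>s. (cmod (query_final n 3 x H [U1] s))\<^sup>2"
    have tot: "(\<Sum>s\<in>?S. ?p s) = 1"
    proof -
      have "(\<Sum>s\<in>?S. ?p s) = (\<Sum>s\<in>?S. wt (fl x s) / W)" by (rule sum.cong) (auto simp: prob)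
      also have "\<dots> = (\<Sum>s\<in>?S. wt s / W)"
        by (rule sum.reindex_bij_witness[where i="fl x" and j="fl x"]) (auto simp: flS flfl)
      also have "\<dots> = 1" using Wpos by (simp add: sum_divide_distrib[symmetric] W_def)
      finally show ?thesis .
    qed
    have Dv: "(\<Sum>s\<in>?S. (if out s then 1 else -1) * ?p s) = (TT n x - 1) / W"
    proof -
      have "(\<Sum>s\<in>?S. (if out s then 1 else -1) * ?p s) = (\<Sum>s\<in>?S. (if out s then 1 else -1) * wt (fl x s)) / W"
        by (simp add: sum_divide_distrib prob)
      also have "(\<Sum>s\<in>?S. (if out s then 1 else -1) * wt (fl x s))
          = (\<Sum>i\<in>{1..n}. (if x i then (if odd i then 1 else -1) * 2 ^ (i + 1) else 0) - (if i = 1 then 1 else 0))"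
        unfolding sum_QB3
        by (rule sum.cong) (auto simp: out_def fl_def wt_def)
      also have "\<dots> = TT n x - 1"
        using n by (simp add: sum_subtractf TT_def sum.delta)
      finally show ?thesis .
    qed
    have sp: "(\<Sum>s\<in>?S. (if out s then 1 else -1) * ?p s) = (\<Sum>s\<in>{s\<in>?S. out s}. ?p s) - (\<Sum>s\<in>{s\<in>?S. \<not> out s}. ?p s)"
      by (rule sum_pm(1)[OF fS])
    have sp2: "(\<Sum>s\<in>?S. ?p s) = (\<Sum>s\<in>{s\<in>?S. out s}. ?p s) + (\<Sum>s\<in>{s\<in>?S. \<not> out s}. ?p s)"
      by (rule sum_pm(2)[OF fS])
    have T: "(OMB n x \<longrightarrow> TT n x \<ge> 4) \<and> (\<not> OMB n x \<longrightarrow> TT n x \<le> 0)"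
      using TT_props[of n x] by auto
    show "(\<Sum>s\<in>{s\<in>?S. out s = OMB n x}. ?p s) > 1/2"
    proof (cases "OMB n x")
      case True
      then have "(TT n x - 1) / W > 0" using T Wpos by simp
      then show ?thesis using True sp sp2 tot Dv by simp
    next
      case False
      then have "(TT n x - 1) / W < 0" using T Wpos by (simp add: divide_neg_pos)
      then show ?thesis using False sp sp2 tot Dv by simp
    qed
  qed
qed

theorem theorem3:
  fixes n :: nat
  assumes "0 < n"
  shows "UQ n (OMB n) = 1 \<and> real (UQC n (DOMB n)) \<ge> (log 2 (real n) - 3) / 2"
proof
  show "UQ n (OMB n) = 1"
    unfolding UQ_def
  proof (rule Least_equality)
    show "UQ_computes n (OMB n) 1" by (rule UQ_1[OF assms])
    fix y assume "UQ_computes n (OMB n) y"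
    then show "1 \<le> y" using UQ_not0[OF assms] by (cases y) auto
  qed
  obtain c where "UQC_computes n (DOMB n) c" using DOMB_exists[OF assms] by blast
  then have "UQC_computes n (DOMB n) (UQC n (DOMB n))" unfolding UQC_def by (rule LeastI)
  then show "real (UQC n (DOMB n)) \<ge> (log 2 (real n) - 3) / 2"
    by (rule DOMB_lower[OF _ assms])
qed

end
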